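(* Let $E$ be a real Banach space and $F\subseteq E$ a closed subspace which is the range of a linear projection $P:E\to F$ with $\|P\|\le1$. Then: (i) $FBL[F]$ is isometrically order isomorphic to a closed sublattice of $FBL[E]$; (ii) $FBL[F]^*$ is isometrically order isomorphic to a $w^*$-closed band of $FBL[E]^*$.
   Context: For a real Banach space $E$ with dual $E^*$ and closed unit ball $B_E$, let $H[E]$ be the vector space of all positively homogeneous functions $f:E^*\to\mathbb R$ ($f(\lambda x^* )=\lambda f(x^* )$ for $\lambda>0$). For $f\in H[E]$ put $\|f\|_{FBL[E]}:=\sup\{\sum_{k=1}^n|f(x_k^* )| : n\in\mathbb N,\ x_1^*,\dots,x_n^*\in E^*,\ \sup_{x\in B_E}\sum_{k=1}^n|x_k^*(x)|\le 1\}$. $H_0[E]:=\{f\in H[E]:\|f\|_{FBL[E]}<\infty\}$ is a Banach lattice with this norm and pointwise order/operations. For $x\in E$ let $\delta_x(x^* )=x^*(x)$. $FBL[E]$ is the closed sublattice of $H_0[E]$ generated by $\{\delta_x:x\in E\}$; $FBL[F]$ is defined likewise for the Banach space $F$. *)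

theory Defs
  imports "HOL-Analysis.Analysis"
begin

text \<open>The dual E* of a real normed space
  of type 'a is the type of bounded linear functionals on 'a (blinfun).
  Elements of H[E] are real-valued functions on E*.\<close>

type_synonym 'a fblfun = "('a \<Rightarrow>\<^sub>L real) \<Rightarrow> real"

definition pos_homogeneous :: "'a::real_normed_vector fblfun \<Rightarrow> bool" where
  "pos_homogeneous f \<longleftrightarrow> (\<forall>xs (t::real). t > 0 \<longrightarrow> f (t *\<^sub>R xs) = t * f xs)"

definition fbl_sums :: "'a::real_normed_vector fblfun \<Rightarrow> real set" where
  "fbl_sums f = {(\<Sum>k<n. \<bar>f (xs k)\<bar>) | (n::nat) xs.
      \<forall>x. norm x \<le> 1 \<longrightarrow> (\<Sum>k<n. \<bar>blinfun_apply (xs k) x\<bar>) \<le> 1}"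

definition fbl_norm :: "'a::real_normed_vector fblfun \<Rightarrow> real" where
  "fbl_norm f = Sup (fbl_sums f)"

definition H0 :: "'a::real_normed_vector fblfun set" where
  "H0 = {f. pos_homogeneous f \<and> bdd_above (fbl_sums f)}"

definition fbl_delta :: "'a::real_normed_vector \<Rightarrow> 'a fblfun" where
  "fbl_delta x = (\<lambda>xs. blinfun_apply xs x)"

definition closed_sublattice_of :: "'a::real_normed_vector fblfun set \<Rightarrow> 'a fblfun set \<Rightarrow> bool" where
  "closed_sublattice_of Y S \<longleftrightarrow> S \<subseteq> Y \<and> S \<noteq> {} \<and>
     (\<forall>f\<in>S. \<forall>g\<in>S. (\<lambda>xs. f xs + g xs) \<in> S) \<and>
     (\<forall>c::real. \<forall>f\<in>S. (\<lambda>xs. c * f xs) \<in> S) \<and>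
     (\<forall>f\<in>S. \<forall>g\<in>S. (\<lambda>xs. max (f xs) (g xs)) \<in> S) \<and>
     (\<forall>f\<in>Y. (\<forall>\<epsilon>>0. \<exists>g\<in>S. fbl_norm (\<lambda>xs. f xs - g xs) < \<epsilon>) \<longrightarrow> f \<in> S)"

definition FBL :: "'a::real_normed_vector fblfun set" where
  "FBL = \<Inter> {S. closed_sublattice_of H0 S \<and> range fbl_delta \<subseteq> S}"

text \<open>Topological dual of FBL[E]: bounded linear functionals on FBL[E], represented
  canonically as functions vanishing outside FBL[E].\<close>
definition FBL_dual :: "('a::real_normed_vector fblfun \<Rightarrow> real) set" where
  "FBL_dual = {\<phi>. (\<forall>f\<in>FBL. \<forall>g\<in>FBL. \<phi> (\<lambda>xs. f xs + g xs) = \<phi> f + \<phi> g) \<and>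
                  (\<forall>c. \<forall>f\<in>FBL. \<phi> (\<lambda>xs. c * f xs) = c * \<phi> f) \<and>
                  (\<exists>C. \<forall>f\<in>FBL. \<bar>\<phi> f\<bar> \<le> C * fbl_norm f) \<and>
                  (\<forall>f. f \<notin> FBL \<longrightarrow> \<phi> f = 0)}"

definition dual_norm :: "('a::real_normed_vector fblfun \<Rightarrow> real) \<Rightarrow> real" where
  "dual_norm \<phi> = Sup {\<bar>\<phi> f\<bar> | f. f \<in> FBL \<and> fbl_norm f \<le> 1}"

definition dual_le :: "('a::real_normed_vector fblfun \<Rightarrow> real) \<Rightarrow> ('a fblfun \<Rightarrow> real) \<Rightarrow> bool" where
  "dual_le \<phi> \<psi> \<longleftrightarrow> (\<forall>f\<in>FBL. (\<forall>xs. 0 \<le> f xs) \<longrightarrow> \<phi> f \<le> \<psi> f)"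

definition dual_is_sup :: "('a::real_normed_vector fblfun \<Rightarrow> real) set \<Rightarrow> ('a fblfun \<Rightarrow> real) \<Rightarrow> bool" where
  "dual_is_sup A s \<longleftrightarrow> s \<in> FBL_dual \<and> (\<forall>a\<in>A. dual_le a s) \<and>
      (\<forall>u\<in>FBL_dual. (\<forall>a\<in>A. dual_le a u) \<longrightarrow> dual_le s u)"

text \<open>Ideal (solid subspace) of FBL[E]*; |\<phi>| is the supremum of {\<phi>, -\<phi>}.\<close>
definition dual_ideal :: "('a::real_normed_vector fblfun \<Rightarrow> real) set \<Rightarrow> bool" where
  "dual_ideal B \<longleftrightarrow> B \<subseteq> FBL_dual \<and> B \<noteq> {} \<and>
     (\<forall>\<phi>\<in>B. \<forall>\<psi>\<in>B. (\<lambda>f. \<phi> f + \<psi> f) \<in> B) \<and>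
     (\<forall>c::real. \<forall>\<phi>\<in>B. (\<lambda>f. c * \<phi> f) \<in> B) \<and>
     (\<forall>\<psi>\<in>B. \<forall>\<phi>\<in>FBL_dual. \<forall>m n.
        dual_is_sup {\<psi>, (\<lambda>f. - \<psi> f)} m \<and> dual_is_sup {\<phi>, (\<lambda>f. - \<phi> f)} n \<and> dual_le n m
        \<longrightarrow> \<phi> \<in> B)"

definition dual_band :: "('a::real_normed_vector fblfun \<Rightarrow> real) set \<Rightarrow> bool" where
  "dual_band B \<longleftrightarrow> dual_ideal B \<and> (\<forall>A s. A \<subseteq> B \<and> dual_is_sup A s \<longrightarrow> s \<in> B)"

definition weak_star_closed :: "('a::real_normed_vector fblfun \<Rightarrow> real) set \<Rightarrow> bool" where
  "weak_star_closed B \<longleftrightarrow> B \<subseteq> FBL_dual \<and>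
     (\<forall>\<phi>\<in>FBL_dual - B. \<exists>fs \<epsilon>. finite fs \<and> fs \<subseteq> FBL \<and> \<epsilon> > 0 \<and>
        (\<forall>\<psi>\<in>FBL_dual. (\<forall>f\<in>fs. \<bar>\<psi> f - \<phi> f\<bar> < \<epsilon>) \<longrightarrow> \<psi> \<notin> B))"

end

theory Submission
  imports Defs
begin


lemma fbl_sums_iff:
  "s \<in> fbl_sums f \<longleftrightarrow> (\<exists>(n::nat) xs. s = (\<Sum>k<n. \<bar>f (xs k)\<bar>) \<and>
      (\<forall>x. norm x \<le> 1 \<longrightarrow> (\<Sum>k<n. \<bar>blinfun_apply (xs k) x\<bar>) \<le> 1))"
  unfolding fbl_sums_def by blast

lemma zero_in_fbl_sums: "0 \<in> fbl_sums f"
  unfolding fbl_sums_iff by (rule exI[of _ 0]) auto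

lemma sum_le_norm:
  fixes n :: nat
  assumes "f \<in> H0" "\<forall>x. norm x \<le> 1 \<longrightarrow> (\<Sum>k<n. \<bar>blinfun_apply (xs k) x\<bar>) \<le> 1"
  shows "(\<Sum>k<n. \<bar>f (xs k)\<bar>) \<le> fbl_norm f"
  unfolding fbl_norm_def
  apply (rule cSup_upper)
  using assms unfolding H0_def fbl_sums_iff by auto

lemma fbl_norm_nonneg: "f \<in> H0 \<Longrightarrow> 0 \<le> fbl_norm f"
  unfolding fbl_norm_def H0_def by (auto intro: cSup_upper zero_in_fbl_sums)

lemma fbl_norm_least:
  fixes f :: "'a::real_normed_vector fblfun"
  assumes "\<And>(n::nat) xs. \<forall>x. norm x \<le> 1 \<longrightarrow> (\<Sum>k<n. \<bar>blinfun_apply (xs k) x\<bar>) \<le> 1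
     \<Longrightarrow> (\<Sum>k<n. \<bar>f (xs k)\<bar>) \<le> B"
  shows "fbl_norm f \<le> B"
  unfolding fbl_norm_def
  apply (rule cSup_least)
  using zero_in_fbl_sums apply blast
  using assms unfolding fbl_sums_iff by auto

lemma bdd_fbl_sums:
  fixes f :: "'a::real_normed_vector fblfun"
  assumes "\<And>(n::nat) xs. \<forall>x. norm x \<le> 1 \<longrightarrow> (\<Sum>k<n. \<bar>blinfun_apply (xs k) x\<bar>) \<le> 1
     \<Longrightarrow> (\<Sum>k<n. \<bar>f (xs k)\<bar>) \<le> B"
  shows "bdd_above (fbl_sums f)"
  apply (rule bdd_aboveI[of _ B])
  using assms unfolding fbl_sums_iff by blast

lemma pos_hom_zero: "pos_homogeneous f \<Longrightarrow> f 0 = 0"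
  unfolding pos_homogeneous_def
  by (metis scaleR_zero_right mult_cancel_right1 zero_less_numeral
      numeral_eq_one_iff semiring_norm(85) mult.commute)

lemma pointwise_bound:
  assumes "f \<in> H0"
  shows "\<bar>f xs\<bar> \<le> fbl_norm f * norm xs"
proof (cases "xs = 0")
  case True
  then show ?thesis using assms pos_hom_zero unfolding H0_def by auto
next
  case False
  then have np: "norm xs > 0" by simp
  define u where "u = (1 / norm xs) *\<^sub>R xs"
  have adm: "\<forall>x. norm x \<le> 1 \<longrightarrow> (\<Sum>k<(1::nat). \<bar>blinfun_apply ((\<lambda>_. u) k) x\<bar>) \<le> 1"
  proof (intro allI impI)
    fix x :: 'a assume "norm x \<le> 1"
    have "\<bar>blinfun_apply xs x\<bar> \<le> norm xs * norm x" using norm_blinfun[of xs x] by simp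
    also have "\<dots> \<le> norm xs" using \<open>norm x \<le> 1\<close> np by (simp add: mult_left_le)
    finally have "\<bar>blinfun_apply xs x\<bar> / norm xs \<le> 1" using np by simp
    then show "(\<Sum>k<(1::nat). \<bar>blinfun_apply ((\<lambda>_. u) k) x\<bar>) \<le> 1"
      using np by (simp add: u_def blinfun.scaleR_left abs_mult)
  qed
  have "\<bar>f u\<bar> \<le> fbl_norm f" using sum_le_norm[OF assms adm] by simp
  moreover have "f u = f xs / norm xs"
    using assms np unfolding H0_def pos_homogeneous_def u_def by auto
  ultimately have "\<bar>f xs\<bar> / norm xs \<le> fbl_norm f" using np by (simp add: abs_div)
  then show ?thesis using np by (simp add: divide_le_eq)
qed


lemma H0_add: fixes f g :: "'a::real_normed_vector fblfun" assumes "f \<in> H0" "g \<in> H0" shows "(\<lambda>xs. f xs + g xs) \<in> H0"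
proof -
  have "bdd_above (fbl_sums (\<lambda>xs. f xs + g xs))"
  proof (rule bdd_fbl_sums)
    fix n :: nat and xs :: "nat \<Rightarrow> 'a \<Rightarrow>\<^sub>L real" assume a: "\<forall>x. norm x \<le> 1 \<longrightarrow> (\<Sum>k<n. \<bar>blinfun_apply (xs k) x\<bar>) \<le> 1"
    have "(\<Sum>k<n. \<bar>f (xs k) + g (xs k)\<bar>) \<le> (\<Sum>k<n. \<bar>f (xs k)\<bar> + \<bar>g (xs k)\<bar>)"
      by (rule sum_mono) (rule abs_triangle_ineq)
    also have "\<dots> = (\<Sum>k<n. \<bar>f (xs k)\<bar>) + (\<Sum>k<n. \<bar>g (xs k)\<bar>)" by (rule sum.distrib)
    also have "\<dots> \<le> fbl_norm f + fbl_norm g"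
      using sum_le_norm[OF assms(1) a] sum_le_norm[OF assms(2) a] by linarith
    finally show "(\<Sum>k<n. \<bar>f (xs k) + g (xs k)\<bar>) \<le> fbl_norm f + fbl_norm g" .
  qed
  moreover have "pos_homogeneous (\<lambda>xs. f xs + g xs)"
    using assms unfolding H0_def pos_homogeneous_def by (simp add: distrib_left)
  ultimately show ?thesis unfolding H0_def by simp
qed

lemma H0_scale: fixes f :: "'a::real_normed_vector fblfun" assumes "f \<in> H0" shows "(\<lambda>xs. c * f xs) \<in> H0"
proof -
  have "bdd_above (fbl_sums (\<lambda>xs. c * f xs))"
  proof (rule bdd_fbl_sums)
    fix n :: nat and xs :: "nat \<Rightarrow> 'a \<Rightarrow>\<^sub>L real" assume a: "\<forall>x. norm x \<le> 1 \<longrightarrow> (\<Sum>k<n. \<bar>blinfun_apply (xs k) x\<bar>) \<le> 1"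
    have "(\<Sum>k<n. \<bar>c * f (xs k)\<bar>) = \<bar>c\<bar> * (\<Sum>k<n. \<bar>f (xs k)\<bar>)"
      by (simp add: abs_mult sum_distrib_left)
    also have "\<dots> \<le> \<bar>c\<bar> * fbl_norm f"
      using sum_le_norm[OF assms(1) a] by (simp add: mult_left_mono)
    finally show "(\<Sum>k<n. \<bar>c * f (xs k)\<bar>) \<le> \<bar>c\<bar> * fbl_norm f" .
  qed
  moreover have "pos_homogeneous (\<lambda>xs. c * f xs)"
    using assms unfolding H0_def pos_homogeneous_def by simp
  ultimately show ?thesis unfolding H0_def by simp
qed

lemma H0_max: fixes f g :: "'a::real_normed_vector fblfun" assumes "f \<in> H0" "g \<in> H0" shows "(\<lambda>xs. max (f xs) (g xs)) \<in> H0"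
proof -
  have "bdd_above (fbl_sums (\<lambda>xs. max (f xs) (g xs)))"
  proof (rule bdd_fbl_sums)
    fix n :: nat and xs :: "nat \<Rightarrow> 'a \<Rightarrow>\<^sub>L real" assume a: "\<forall>x. norm x \<le> 1 \<longrightarrow> (\<Sum>k<n. \<bar>blinfun_apply (xs k) x\<bar>) \<le> 1"
    have "(\<Sum>k<n. \<bar>max (f (xs k)) (g (xs k))\<bar>) \<le> (\<Sum>k<n. \<bar>f (xs k)\<bar> + \<bar>g (xs k)\<bar>)"
      by (rule sum_mono) auto
    also have "\<dots> = (\<Sum>k<n. \<bar>f (xs k)\<bar>) + (\<Sum>k<n. \<bar>g (xs k)\<bar>)" by (rule sum.distrib)
    also have "\<dots> \<le> fbl_norm f + fbl_norm g"
      using sum_le_norm[OF assms(1) a] sum_le_norm[OF assms(2) a] by linarith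
    finally show "(\<Sum>k<n. \<bar>max (f (xs k)) (g (xs k))\<bar>) \<le> fbl_norm f + fbl_norm g" .
  qed
  moreover have "pos_homogeneous (\<lambda>xs. max (f xs) (g xs))"
    using assms unfolding H0_def pos_homogeneous_def by (simp add: max_mult_distrib_left)
  ultimately show ?thesis unfolding H0_def by simp
qed

lemma delta_H0: "fbl_delta (x::'a::real_normed_vector) \<in> H0"
proof -
  have "bdd_above (fbl_sums (fbl_delta x))"
  proof (rule bdd_fbl_sums)
    fix n :: nat and xs :: "nat \<Rightarrow> 'a \<Rightarrow>\<^sub>L real" assume a: "\<forall>x. norm x \<le> 1 \<longrightarrow> (\<Sum>k<n. \<bar>blinfun_apply (xs k) x\<bar>) \<le> 1"
    show "(\<Sum>k<n. \<bar>fbl_delta x (xs k)\<bar>) \<le> norm x"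
    proof (cases "x = 0")
      case True then show ?thesis by (simp add: fbl_delta_def)
    next
      case False
      then have np: "norm x > 0" by simp
      have "(\<Sum>k<n. \<bar>fbl_delta x (xs k)\<bar>) = norm x * (\<Sum>k<n. \<bar>blinfun_apply (xs k) ((1 / norm x) *\<^sub>R x)\<bar>)"
        using np by (simp add: fbl_delta_def blinfun.scaleR_right abs_mult sum_distrib_left)
      also have "\<dots> \<le> norm x * 1"
        apply (rule mult_left_mono)
        using a np by auto
      finally show ?thesis by simp
    qed
  qed
  moreover have "pos_homogeneous (fbl_delta x)"
    unfolding pos_homogeneous_def fbl_delta_def by (simp add: blinfun.scaleR_left)
  ultimately show ?thesis unfolding H0_def by simp
qed

lemma H0_cs: "closed_sublattice_of H0 H0"
  unfolding closed_sublattice_of_def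
proof (intro conjI ballI allI impI)
  show "H0 \<noteq> {}" using delta_H0 by blast
qed (auto intro: H0_add H0_scale H0_max)

lemma FBL_least: "closed_sublattice_of H0 S \<Longrightarrow> range fbl_delta \<subseteq> S \<Longrightarrow> FBL \<subseteq> S"
  unfolding FBL_def by (rule Inter_lower) simp

lemma FBL_iff: "f \<in> FBL \<longleftrightarrow> (\<forall>S. closed_sublattice_of H0 S \<and> range fbl_delta \<subseteq> S \<longrightarrow> f \<in> S)"
  unfolding FBL_def by auto

lemma FBL_H0: "FBL \<subseteq> H0"
  using FBL_least[OF H0_cs] delta_H0 by blast

lemma delta_FBL: "fbl_delta x \<in> FBL"
  unfolding FBL_iff by blast

lemma csD:
  assumes "closed_sublattice_of Y S"
  shows "f \<in> S \<Longrightarrow> g \<in> S \<Longrightarrow> (\<lambda>xs. f xs + g xs) \<in> S"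
    and "f \<in> S \<Longrightarrow> (\<lambda>xs. c * f xs) \<in> S"
    and "f \<in> S \<Longrightarrow> g \<in> S \<Longrightarrow> (\<lambda>xs. max (f xs) (g xs)) \<in> S"
  using assms unfolding closed_sublattice_of_def by blast+

lemma FBL_add: "f \<in> FBL \<Longrightarrow> g \<in> FBL \<Longrightarrow> (\<lambda>xs. f xs + g xs) \<in> FBL"
  unfolding FBL_iff using csD(1) by metis

lemma FBL_scale: "f \<in> FBL \<Longrightarrow> (\<lambda>xs. c * f xs) \<in> FBL"
  unfolding FBL_iff using csD(2) by metis

lemma FBL_max: "f \<in> FBL \<Longrightarrow> g \<in> FBL \<Longrightarrow> (\<lambda>xs. max (f xs) (g xs)) \<in> FBL"
  unfolding FBL_iff using csD(3) by metis

lemma FBL_closed: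
  fixes f :: "'a::real_normed_vector fblfun"
  assumes "f \<in> H0" "\<forall>\<epsilon>>0. \<exists>g\<in>FBL. fbl_norm (\<lambda>xs. f xs - g xs) < \<epsilon>"
  shows "f \<in> FBL"
  unfolding FBL_iff
proof (intro allI impI)
  fix S :: "'a fblfun set" assume "closed_sublattice_of H0 S \<and> range fbl_delta \<subseteq> S"
  then have S: "closed_sublattice_of H0 S" "range fbl_delta \<subseteq> S" by auto
  then have "FBL \<subseteq> S" by (rule FBL_least)
  then have "\<forall>\<epsilon>>0. \<exists>g\<in>S. fbl_norm (\<lambda>xs. f xs - g xs) < \<epsilon>" using assms(2) by blast
  then show "f \<in> S" using S(1) assms(1) unfolding closed_sublattice_of_def by blast
qed

lemma FBL_cs: "closed_sublattice_of H0 FBL"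
  unfolding closed_sublattice_of_def
proof (intro conjI ballI allI impI)
  show "FBL \<noteq> {}" using delta_FBL by blast
qed (auto intro: FBL_H0[THEN subsetD] FBL_add FBL_scale FBL_max FBL_closed)

lemma FBL_zero: "(\<lambda>xs. 0) \<in> FBL"
  using FBL_scale[OF delta_FBL, of 0] by simp

lemma FBL_diff: "f \<in> FBL \<Longrightarrow> g \<in> FBL \<Longrightarrow> (\<lambda>xs. f xs - g xs) \<in> FBL"
  using FBL_add[OF _ FBL_scale[of g "-1"], of f] by simp

lemma H0_diff: "f \<in> H0 \<Longrightarrow> g \<in> H0 \<Longrightarrow> (\<lambda>xs. f xs - g xs) \<in> H0"
  using H0_add[OF _ H0_scale[of g "-1"], of f] by simp


definition adm_map :: "('b::real_normed_vector \<Rightarrow>\<^sub>L real \<Rightarrow> 'a::real_normed_vector \<Rightarrow>\<^sub>L real) \<Rightarrow> bool" where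
  "adm_map c \<longleftrightarrow> (\<forall>t>0. \<forall>ys. c (t *\<^sub>R ys) = t *\<^sub>R c ys) \<and>
     (\<forall>(n::nat) ys. (\<forall>y. norm y \<le> 1 \<longrightarrow> (\<Sum>k<n. \<bar>blinfun_apply (ys k) y\<bar>) \<le> 1) \<longrightarrow>
        (\<forall>x. norm x \<le> 1 \<longrightarrow> (\<Sum>k<n. \<bar>blinfun_apply (c (ys k)) x\<bar>) \<le> 1))"

lemma comp_sums: "adm_map c \<Longrightarrow> fbl_sums (\<lambda>ys. f (c ys)) \<subseteq> fbl_sums f"
  unfolding adm_map_def
proof (clarify)
  fix s assume a: "\<forall>(n::nat) ys. (\<forall>y. norm y \<le> 1 \<longrightarrow> (\<Sum>k<n. \<bar>blinfun_apply (ys k) y\<bar>) \<le> 1) \<longrightarrow>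
        (\<forall>x. norm x \<le> 1 \<longrightarrow> (\<Sum>k<n. \<bar>blinfun_apply (c (ys k)) x\<bar>) \<le> 1)"
    and s: "s \<in> fbl_sums (\<lambda>ys. f (c ys))"
  from s obtain n :: nat and ys where "s = (\<Sum>k<n. \<bar>f (c (ys k))\<bar>)"
    "\<forall>y. norm y \<le> 1 \<longrightarrow> (\<Sum>k<n. \<bar>blinfun_apply (ys k) y\<bar>) \<le> 1"
    unfolding fbl_sums_iff by blast
  then show "s \<in> fbl_sums f" unfolding fbl_sums_iff
    using a by (intro exI[of _ n] exI[of _ "\<lambda>k. c (ys k)"]) auto
qed

lemma comp_H0: assumes "adm_map c" "f \<in> H0" shows "(\<lambda>ys. f (c ys)) \<in> H0"
proof -
  have "pos_homogeneous (\<lambda>ys. f (c ys))"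
    using assms unfolding adm_map_def H0_def pos_homogeneous_def by simp
  moreover have "bdd_above (fbl_sums (\<lambda>ys. f (c ys)))"
    using comp_sums[OF assms(1), of f] assms(2) unfolding H0_def by (auto intro: bdd_above_mono)
  ultimately show ?thesis unfolding H0_def by simp
qed

lemma comp_norm: assumes "adm_map c" "f \<in> H0" shows "fbl_norm (\<lambda>ys. f (c ys)) \<le> fbl_norm f"
  unfolding fbl_norm_def
  apply (rule cSup_subset_mono)
  using zero_in_fbl_sums comp_sums[OF assms(1), of f] assms(2) unfolding H0_def by auto

lemma comp_FBL:
  fixes c :: "'b::real_normed_vector \<Rightarrow>\<^sub>L real \<Rightarrow> 'a::real_normed_vector \<Rightarrow>\<^sub>L real" and f :: "'a fblfun"
  assumes c: "adm_map c" and d: "\<And>x. \<exists>x'. \<forall>ys. blinfun_apply (c ys) x = blinfun_apply ys x'"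
    and f: "f \<in> FBL"
  shows "(\<lambda>ys. f (c ys)) \<in> FBL"
proof -
  define S where "S = {f \<in> H0. (\<lambda>ys. f (c ys)) \<in> FBL}"
  have "closed_sublattice_of H0 S"
    unfolding closed_sublattice_of_def
  proof (intro conjI ballI allI impI)
    show "S \<subseteq> H0" unfolding S_def by blast
    obtain x' where "\<forall>ys. blinfun_apply (c ys) 0 = blinfun_apply ys x'" using d by blast
    then have "(\<lambda>ys. fbl_delta 0 (c ys)) = fbl_delta x'" unfolding fbl_delta_def by auto
    then show "S \<noteq> {}" unfolding S_def using delta_H0 delta_FBL by (metis (mono_tags) empty_iff mem_Collect_eq)
  next
    fix f g assume "f \<in> S" "g \<in> S"
    then show "(\<lambda>xs. f xs + g xs) \<in> S" "(\<lambda>xs. max (f xs) (g xs)) \<in> S"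
      unfolding S_def using H0_add H0_max FBL_add[of "\<lambda>ys. f (c ys)" "\<lambda>ys. g (c ys)"]
         FBL_max[of "\<lambda>ys. f (c ys)" "\<lambda>ys. g (c ys)"] by auto
  next
    fix f :: "'a fblfun" and r :: real assume "f \<in> S"
    then show "(\<lambda>xs. r * f xs) \<in> S"
      unfolding S_def using H0_scale FBL_scale[of "\<lambda>ys. f (c ys)" r] by auto
  next
    fix f assume f: "f \<in> H0" and ap: "\<forall>\<epsilon>>0. \<exists>g\<in>S. fbl_norm (\<lambda>xs. f xs - g xs) < \<epsilon>"
    have "(\<lambda>ys. f (c ys)) \<in> FBL"
    proof (rule FBL_closed)
      show "(\<lambda>ys. f (c ys)) \<in> H0" by (rule comp_H0[OF c f])
      show "\<forall>\<epsilon>>0. \<exists>g\<in>FBL. fbl_norm (\<lambda>xs. f (c xs) - g xs) < \<epsilon>"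
      proof (intro allI impI)
        fix e :: real assume "e > 0"
        then obtain g where g: "g \<in> S" "fbl_norm (\<lambda>xs. f xs - g xs) < e" using ap by blast
        have "fbl_norm (\<lambda>ys. (\<lambda>xs. f xs - g xs) (c ys)) \<le> fbl_norm (\<lambda>xs. f xs - g xs)"
          apply (rule comp_norm[OF c])
          using g f H0_diff unfolding S_def by blast
        then show "\<exists>g\<in>FBL. fbl_norm (\<lambda>xs. f (c xs) - g xs) < e"
          using g unfolding S_def by (intro bexI[of _ "\<lambda>ys. g (c ys)"]) auto
      qed
    qed
    then show "f \<in> S" unfolding S_def using f by blast
  qed
  moreover have "range fbl_delta \<subseteq> S"
  proof clarify
    fix x :: 'a
    obtain x' where "\<forall>ys. blinfun_apply (c ys) x = blinfun_apply ys x'" using d by blast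
    then have "(\<lambda>ys. fbl_delta x (c ys)) = fbl_delta x'" unfolding fbl_delta_def by auto
    then show "fbl_delta x \<in> S" unfolding S_def by (simp add: delta_H0 delta_FBL)
  qed
  ultimately have "FBL \<subseteq> S" by (rule FBL_least)
  then show ?thesis using f unfolding S_def by blast
qed



lemma small_zero:
  fixes a K :: real
  assumes "K \<ge> 0" "\<And>e. e > 0 \<Longrightarrow> \<bar>a\<bar> \<le> e * K"
  shows "a = 0"
proof (rule ccontr)
  assume "a \<noteq> 0"
  then have p: "\<bar>a\<bar> > 0" by simp
  have "\<bar>a\<bar> \<le> (\<bar>a\<bar> / (K + 1)) * K" using assms(2)[of "\<bar>a\<bar> / (K+1)"] p assms(1) by simp
  also have "\<dots> < \<bar>a\<bar>" using p assms(1) by (simp add: divide_less_eq field_simps)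
  finally show False by simp
qed

locale fbl_setting =
  fixes J :: "'b::banach \<Rightarrow> 'a::banach" and P :: "'a \<Rightarrow> 'b"
  assumes linJ: "linear J" and nJ: "\<And>y. norm (J y) = norm y"
    and blP: "bounded_linear P" and PJ: "\<And>y. P (J y) = y" and nP: "onorm P \<le> 1"
begin

lemma blJ: "bounded_linear J"
  by (rule bounded_linear_intro[where K=1]) (auto simp: linear_add[OF linJ] linear_scale[OF linJ] nJ)

definition "Jb = Blinfun J"
definition "Pb = Blinfun P"

lemma Jb_apply[simp]: "blinfun_apply Jb = J"
  unfolding Jb_def using blJ by (rule bounded_linear_Blinfun_apply)
lemma Pb_apply[simp]: "blinfun_apply Pb = P"
  unfolding Pb_def using blP by (rule bounded_linear_Blinfun_apply)

lemma normP: "norm (P x) \<le> norm x"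
proof -
  have "onorm P * norm x \<le> 1 * norm x" using nP by (rule mult_right_mono) simp
  then show ?thesis using onorm[OF blP, of x] by simp
qed

lemma cTcR[simp]: "(ys o\<^sub>L Pb) o\<^sub>L Jb = ys"
  by (rule blinfun_eqI) (simp add: PJ)

definition R :: "'a fblfun \<Rightarrow> 'b fblfun" where "R f = (\<lambda>ys. f (ys o\<^sub>L Pb))"
definition T :: "'b fblfun \<Rightarrow> 'a fblfun" where "T g = (\<lambda>xs. g (xs o\<^sub>L Jb))"

lemma adm_R: "adm_map (\<lambda>ys. ys o\<^sub>L Pb)"
  unfolding adm_map_def
proof (intro conjI allI impI)
  fix t :: real and ys :: "'b \<Rightarrow>\<^sub>L real"
  show "(t *\<^sub>R ys) o\<^sub>L Pb = t *\<^sub>R (ys o\<^sub>L Pb)"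
    by (rule blinfun_eqI) (simp add: blinfun.scaleR_left)
next
  fix n :: nat and ys :: "nat \<Rightarrow> 'b \<Rightarrow>\<^sub>L real" and x :: 'a
  assume a: "\<forall>y. norm y \<le> 1 \<longrightarrow> (\<Sum>k<n. \<bar>blinfun_apply (ys k) y\<bar>) \<le> 1" and x: "norm x \<le> 1"
  have "norm (P x) \<le> 1" using normP[of x] x by simp
  then show "(\<Sum>k<n. \<bar>blinfun_apply (ys k o\<^sub>L Pb) x\<bar>) \<le> 1" using a by simp
qed

lemma adm_T: "adm_map (\<lambda>xs. xs o\<^sub>L Jb)"
  unfolding adm_map_def
proof (intro conjI allI impI)
  fix t :: real and ys :: "'a \<Rightarrow>\<^sub>L real"
  show "(t *\<^sub>R ys) o\<^sub>L Jb = t *\<^sub>R (ys o\<^sub>L Jb)"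
    by (rule blinfun_eqI) (simp add: blinfun.scaleR_left)
next
  fix n :: nat and ys :: "nat \<Rightarrow> 'a \<Rightarrow>\<^sub>L real" and x :: 'b
  assume a: "\<forall>y. norm y \<le> 1 \<longrightarrow> (\<Sum>k<n. \<bar>blinfun_apply (ys k) y\<bar>) \<le> 1" and x: "norm x \<le> 1"
  have "norm (J x) \<le> 1" using nJ[of x] x by simp
  then show "(\<Sum>k<n. \<bar>blinfun_apply (ys k o\<^sub>L Jb) x\<bar>) \<le> 1" using a by simp
qed

lemma R_FBL: "f \<in> FBL \<Longrightarrow> R f \<in> FBL"
  unfolding R_def by (rule comp_FBL[OF adm_R]) auto

lemma T_FBL: "g \<in> FBL \<Longrightarrow> T g \<in> FBL"
  unfolding T_def by (rule comp_FBL[OF adm_T]) auto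

lemma RT[simp]: "R (T g) = g"
  unfolding R_def T_def by simp

lemma R_H0: "f \<in> H0 \<Longrightarrow> R f \<in> H0"
  unfolding R_def by (rule comp_H0[OF adm_R])

lemma T_H0: "g \<in> H0 \<Longrightarrow> T g \<in> H0"
  unfolding T_def by (rule comp_H0[OF adm_T])

lemma R_norm: "f \<in> H0 \<Longrightarrow> fbl_norm (R f) \<le> fbl_norm f"
  unfolding R_def by (rule comp_norm[OF adm_R])

lemma T_sums: "fbl_sums (T g) = fbl_sums g"
proof
  show "fbl_sums (T g) \<subseteq> fbl_sums g" unfolding T_def by (rule comp_sums[OF adm_T])
  have "fbl_sums (R (T g)) \<subseteq> fbl_sums (T g)" unfolding R_def by (rule comp_sums[OF adm_R])
  then show "fbl_sums g \<subseteq> fbl_sums (T g)" by simp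
qed

lemma T_norm: "fbl_norm (T g) = fbl_norm g"
  unfolding fbl_norm_def T_sums ..

lemma FBL_in_H0: "f \<in> FBL \<Longrightarrow> f \<in> H0"
  using FBL_H0 by blast

lemma part1:
  "(\<forall>f\<in>FBL. T f \<in> FBL) \<and>
   (\<forall>f\<in>FBL. \<forall>g\<in>FBL. T (\<lambda>xs. f xs + g xs) = (\<lambda>xs. T f xs + T g xs)) \<and>
   (\<forall>c. \<forall>f\<in>FBL. T (\<lambda>xs. c * f xs) = (\<lambda>xs. c * T f xs)) \<and>
   (\<forall>f\<in>FBL. fbl_norm (T f) = fbl_norm f) \<and>
   (\<forall>f\<in>FBL. \<forall>g\<in>FBL. (\<forall>xs. f xs \<le> g xs) \<longleftrightarrow> (\<forall>xs. T f xs \<le> T g xs)) \<and>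
   closed_sublattice_of FBL (T ` FBL)"
proof (intro conjI ballI allI)
  fix f g :: "'b fblfun"
  show "(\<forall>xs. f xs \<le> g xs) = (\<forall>xs. T f xs \<le> T g xs)"
  proof
    assume "\<forall>xs. T f xs \<le> T g xs"
    then have "\<forall>ys. T f (ys o\<^sub>L Pb) \<le> T g (ys o\<^sub>L Pb)" by blast
    then show "\<forall>xs. f xs \<le> g xs" unfolding T_def by simp
  qed (simp add: T_def)
next
  show "closed_sublattice_of FBL (T ` FBL)"
    unfolding closed_sublattice_of_def
  proof (intro conjI ballI allI impI)
    show "T ` FBL \<subseteq> FBL" using T_FBL by blast
    show "T ` FBL \<noteq> {}" using delta_FBL by blast
  next
    fix f g assume "f \<in> T ` FBL" "g \<in> T ` FBL"
    then obtain f' g' where "f' \<in> FBL" "g' \<in> FBL" "f = T f'" "g = T g'" by blast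
    then show "(\<lambda>xs. f xs + g xs) \<in> T ` FBL" "(\<lambda>xs. max (f xs) (g xs)) \<in> T ` FBL"
      using FBL_add[of f' g'] FBL_max[of f' g']
      by (auto simp: T_def intro!: image_eqI[of _ T "\<lambda>xs. f' xs + g' xs"] image_eqI[of _ T "\<lambda>xs. max (f' xs) (g' xs)"])
  next
    fix c :: real and f assume "f \<in> T ` FBL"
    then obtain f' where "f' \<in> FBL" "f = T f'" by blast
    then show "(\<lambda>xs. c * f xs) \<in> T ` FBL"
      using FBL_scale[of f' c] by (auto simp: T_def intro!: image_eqI[of _ T "\<lambda>xs. c * f' xs"])
  next
    fix f assume fF: "f \<in> FBL" and ap: "\<forall>\<epsilon>>0. \<exists>g\<in>T ` FBL. fbl_norm (\<lambda>xs. f xs - g xs) < \<epsilon>"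
    have inv: "f xs = f ((xs o\<^sub>L Jb) o\<^sub>L Pb)" for xs
    proof -
      let ?xs' = "(xs o\<^sub>L Jb) o\<^sub>L Pb"
      have "f xs - f ?xs' = 0"
      proof (rule small_zero)
        show "0 \<le> norm xs + norm ?xs'" by simp
        fix e :: real assume "e > 0"
        then obtain g where g: "g \<in> T ` FBL" "fbl_norm (\<lambda>xs. f xs - g xs) < e" using ap by blast
        then obtain h where h: "h \<in> FBL" "g = T h" by blast
        have geq: "g ?xs' = g xs" using h by (simp add: T_def)
        have dH: "(\<lambda>xs. f xs - g xs) \<in> H0" using fF h T_FBL FBL_diff FBL_in_H0 by blast
        have "\<bar>f xs - g xs\<bar> \<le> fbl_norm (\<lambda>xs. f xs - g xs) * norm xs"
          using pointwise_bound[OF dH, of xs] by simp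
        also have "\<dots> \<le> e * norm xs" using g(2) by (simp add: mult_right_mono)
        finally have 1: "\<bar>f xs - g xs\<bar> \<le> e * norm xs" .
        have "\<bar>f ?xs' - g ?xs'\<bar> \<le> fbl_norm (\<lambda>xs. f xs - g xs) * norm ?xs'"
          using pointwise_bound[OF dH, of ?xs'] by simp
        also have "\<dots> \<le> e * norm ?xs'" using g(2) by (simp add: mult_right_mono)
        finally have 2: "\<bar>f ?xs' - g ?xs'\<bar> \<le> e * norm ?xs'" .
        show "\<bar>f xs - f ?xs'\<bar> \<le> e * (norm xs + norm ?xs')"
          using 1 2 geq by (simp add: distrib_left abs_le_iff)
      qed
      then show ?thesis by simp
    qed
    have "f = T (R f)" unfolding T_def R_def using inv by auto
    then show "f \<in> T ` FBL" using R_FBL[OF fF] by blast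
  qed
qed (simp add: T_FBL | simp add: T_norm | simp add: T_def)+

end


lemma dualD:
  fixes \<phi> \<psi> :: "'a::real_normed_vector fblfun \<Rightarrow> real"
  assumes "\<phi> \<in> FBL_dual"
  shows "f \<in> FBL \<Longrightarrow> g \<in> FBL \<Longrightarrow> \<phi> (\<lambda>xs. f xs + g xs) = \<phi> f + \<phi> g"
    and "f \<in> FBL \<Longrightarrow> \<phi> (\<lambda>xs. c * f xs) = c * \<phi> f"
    and "\<exists>C. \<forall>f\<in>FBL. \<bar>\<phi> f\<bar> \<le> C * fbl_norm f"
    and "f \<notin> FBL \<Longrightarrow> \<phi> f = 0"
  using assms unfolding FBL_dual_def by blast+

lemma dual_intro:
  fixes \<phi> \<psi> :: "'a::real_normed_vector fblfun \<Rightarrow> real"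
  assumes "\<And>f g. f \<in> FBL \<Longrightarrow> g \<in> FBL \<Longrightarrow> \<phi> (\<lambda>xs. f xs + g xs) = \<phi> f + \<phi> g"
    and "\<And>c f. f \<in> FBL \<Longrightarrow> \<phi> (\<lambda>xs. c * f xs) = c * \<phi> f"
    and "\<And>f. f \<in> FBL \<Longrightarrow> \<bar>\<phi> f\<bar> \<le> C * fbl_norm f"
    and "\<And>f. f \<notin> FBL \<Longrightarrow> \<phi> f = 0"
  shows "\<phi> \<in> FBL_dual"
  using assms unfolding FBL_dual_def by blast

lemma dual_zero_fn:
  fixes \<phi> \<psi> :: "'a::real_normed_vector fblfun \<Rightarrow> real"
  assumes "\<phi> \<in> FBL_dual" shows "\<phi> (\<lambda>xs. 0) = 0"
  using dualD(2)[OF assms delta_FBL, of 0 0] by simp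

lemma dual_diff:
  fixes \<phi> \<psi> :: "'a::real_normed_vector fblfun \<Rightarrow> real"
  assumes "\<phi> \<in> FBL_dual" "f \<in> FBL" "g \<in> FBL"
  shows "\<phi> (\<lambda>xs. f xs - g xs) = \<phi> f - \<phi> g"
  using dualD(1)[OF assms(1) assms(2) FBL_scale[OF assms(3), of "-1"]] dualD(2)[OF assms(1) assms(3), of "-1"]
  by simp

lemma dual_add_closed:
  fixes \<phi> \<psi> :: "'a::real_normed_vector fblfun \<Rightarrow> real"
  assumes "\<phi> \<in> FBL_dual" "\<psi> \<in> FBL_dual" shows "(\<lambda>f. \<phi> f + \<psi> f) \<in> FBL_dual"
proof -
  obtain C1 where C1: "\<forall>f\<in>FBL. \<bar>\<phi> f\<bar> \<le> C1 * fbl_norm f" using dualD(3)[OF assms(1)] by blast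
  obtain C2 where C2: "\<forall>f\<in>FBL. \<bar>\<psi> f\<bar> \<le> C2 * fbl_norm f" using dualD(3)[OF assms(2)] by blast
  show ?thesis
  proof (rule dual_intro[where C="C1 + C2"])
    fix f :: "'a fblfun" assume "f \<in> FBL"
    then have "\<bar>\<phi> f\<bar> \<le> C1 * fbl_norm f" "\<bar>\<psi> f\<bar> \<le> C2 * fbl_norm f" using C1 C2 by auto
    then show "\<bar>\<phi> f + \<psi> f\<bar> \<le> (C1 + C2) * fbl_norm f" by (simp add: distrib_right)
  next
    fix f g :: "'a fblfun" assume "f \<in> FBL" "g \<in> FBL"
    then show "\<phi> (\<lambda>xs. f xs + g xs) + \<psi> (\<lambda>xs. f xs + g xs) = \<phi> f + \<psi> f + (\<phi> g + \<psi> g)"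
      using dualD(1)[OF assms(1)] dualD(1)[OF assms(2)] by simp
  next
    fix c and f :: "'a fblfun" assume "f \<in> FBL"
    then show "\<phi> (\<lambda>xs. c * f xs) + \<psi> (\<lambda>xs. c * f xs) = c * (\<phi> f + \<psi> f)"
      using dualD(2)[OF assms(1)] dualD(2)[OF assms(2)] by (simp add: distrib_left)
  next
    fix f :: "'a fblfun" assume "f \<notin> FBL"
    then show "\<phi> f + \<psi> f = 0" using dualD(4)[OF assms(1)] dualD(4)[OF assms(2)] by simp
  qed
qed

lemma dual_scale_closed:
  fixes \<phi> \<psi> :: "'a::real_normed_vector fblfun \<Rightarrow> real"
  assumes "\<phi> \<in> FBL_dual" shows "(\<lambda>f. c * \<phi> f) \<in> FBL_dual"
proof -
  obtain C1 where C1: "\<forall>f\<in>FBL. \<bar>\<phi> f\<bar> \<le> C1 * fbl_norm f" using dualD(3)[OF assms(1)] by blast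
  show ?thesis
  proof (rule dual_intro[where C="\<bar>c\<bar> * C1"])
    fix f :: "'a fblfun" assume "f \<in> FBL"
    then show "\<bar>c * \<phi> f\<bar> \<le> \<bar>c\<bar> * C1 * fbl_norm f" using C1
      by (simp add: abs_mult mult.assoc mult_left_mono)
  next
    fix f g :: "'a fblfun" assume "f \<in> FBL" "g \<in> FBL"
    then show "c * \<phi> (\<lambda>xs. f xs + g xs) = c * \<phi> f + c * \<phi> g"
      using dualD(1)[OF assms(1)] by (simp add: distrib_left)
  next
    fix d and f :: "'a fblfun" assume "f \<in> FBL"
    then show "c * \<phi> (\<lambda>xs. d * f xs) = d * (c * \<phi> f)"
      using dualD(2)[OF assms(1)] by simp
  next
    fix f :: "'a fblfun" assume "f \<notin> FBL"
    then show "c * \<phi> f = 0" using dualD(4)[OF assms(1)] by simp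
  qed
qed

lemma dual_zero: "(\<lambda>f::'a::real_normed_vector fblfun. 0::real) \<in> FBL_dual"
  by (rule dual_intro[where C=0]) auto

context fbl_setting
begin

definition S :: "('b fblfun \<Rightarrow> real) \<Rightarrow> ('a fblfun \<Rightarrow> real)" where
  "S \<phi> = (\<lambda>f. if f \<in> FBL then \<phi> (R f) else 0)"
definition Wd :: "('a fblfun \<Rightarrow> real) \<Rightarrow> ('b fblfun \<Rightarrow> real)" where
  "Wd ch = (\<lambda>g. if g \<in> FBL then ch (T g) else 0)"

lemma R_add: "R (\<lambda>xs. f xs + g xs) = (\<lambda>ys. R f ys + R g ys)" by (simp add: R_def)
lemma R_scale: "R (\<lambda>xs. c * f xs) = (\<lambda>ys. c * R f ys)" by (simp add: R_def)
lemma T_add: "T (\<lambda>xs. f xs + g xs) = (\<lambda>ys. T f ys + T g ys)" by (simp add: T_def)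
lemma T_scale: "T (\<lambda>xs. c * f xs) = (\<lambda>ys. c * T f ys)" by (simp add: T_def)

lemma S_dual: fixes \<phi> :: "'b fblfun \<Rightarrow> real" assumes "\<phi> \<in> FBL_dual" shows "S \<phi> \<in> FBL_dual"
proof -
  obtain C where C: "\<forall>f\<in>FBL. \<bar>\<phi> f\<bar> \<le> C * fbl_norm f" using dualD(3)[OF assms] by blast
  show ?thesis
  proof (rule dual_intro[where C="max C 0"])
    fix f :: "'a fblfun" assume f: "f \<in> FBL"
    have "\<bar>\<phi> (R f)\<bar> \<le> C * fbl_norm (R f)" using C R_FBL[OF f] by blast
    also have "\<dots> \<le> max C 0 * fbl_norm (R f)"
      using fbl_norm_nonneg[OF R_H0[OF FBL_in_H0[OF f]]] by (simp add: mult_right_mono)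
    also have "\<dots> \<le> max C 0 * fbl_norm f"
      using R_norm[OF FBL_in_H0[OF f]] by (simp add: mult_left_mono)
    finally show "\<bar>S \<phi> f\<bar> \<le> max C 0 * fbl_norm f" using f by (simp add: S_def)
  next
    fix f g :: "'a fblfun" assume "f \<in> FBL" "g \<in> FBL"
    then show "S \<phi> (\<lambda>xs. f xs + g xs) = S \<phi> f + S \<phi> g"
      using dualD(1)[OF assms R_FBL R_FBL] FBL_add[of f g] by (simp add: S_def R_add)
  next
    fix c and f :: "'a fblfun" assume "f \<in> FBL"
    then show "S \<phi> (\<lambda>xs. c * f xs) = c * S \<phi> f"
      using dualD(2)[OF assms R_FBL] FBL_scale[of f c] by (simp add: S_def R_scale)
  qed (simp add: S_def)
qed

lemma W_dual: fixes ch :: "'a fblfun \<Rightarrow> real" assumes "ch \<in> FBL_dual" shows "Wd ch \<in> FBL_dual"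
proof -
  obtain C where C: "\<forall>f\<in>FBL. \<bar>ch f\<bar> \<le> C * fbl_norm f" using dualD(3)[OF assms] by blast
  show ?thesis
  proof (rule dual_intro[where C="C"])
    fix f :: "'b fblfun" assume f: "f \<in> FBL"
    have "\<bar>ch (T f)\<bar> \<le> C * fbl_norm (T f)" using C T_FBL[OF f] by blast
    then show "\<bar>Wd ch f\<bar> \<le> C * fbl_norm f" using f by (simp add: Wd_def T_norm)
  next
    fix f g :: "'b fblfun" assume "f \<in> FBL" "g \<in> FBL"
    then show "Wd ch (\<lambda>xs. f xs + g xs) = Wd ch f + Wd ch g"
      using dualD(1)[OF assms T_FBL T_FBL] FBL_add[of f g] by (simp add: Wd_def T_add)
  next
    fix c and f :: "'b fblfun" assume "f \<in> FBL"
    then show "Wd ch (\<lambda>xs. c * f xs) = c * Wd ch f"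
      using dualD(2)[OF assms T_FBL] FBL_scale[of f c] by (simp add: Wd_def T_scale)
  qed (simp add: Wd_def)
qed

lemma SW_apply: "f \<in> FBL \<Longrightarrow> S (Wd ch) f = ch (T (R f))"
  by (simp add: S_def Wd_def R_FBL)

lemma S_W:
  fixes ch :: "'a fblfun \<Rightarrow> real"
  assumes "ch \<in> FBL_dual" "\<forall>f\<in>FBL. ch f = ch (T (R f))"
  shows "S (Wd ch) = ch"
proof
  fix f :: "'a fblfun" show "S (Wd ch) f = ch f"
    using assms dualD(4)[OF assms(1)] by (cases "f \<in> FBL") (auto simp: SW_apply, simp add: S_def)
qed

lemma S_inv: "f \<in> FBL \<Longrightarrow> S \<phi> (T (R f)) = S \<phi> f"
  by (simp add: S_def T_FBL R_FBL)

lemma TR_nonneg: "(\<forall>xs. 0 \<le> f xs) \<Longrightarrow> 0 \<le> T (R f) xs"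
  by (simp add: T_def R_def)

lemma kernel:
  fixes ch :: "'a fblfun \<Rightarrow> real"
  assumes chi: "ch \<in> FBL_dual"
    and k: "\<And>f. f \<in> FBL \<Longrightarrow> (\<forall>xs. 0 \<le> f xs) \<Longrightarrow> T (R f) = (\<lambda>xs. 0) \<Longrightarrow> ch f = 0"
  shows "\<forall>f\<in>FBL. ch f = ch (T (R f))"
proof
  fix f :: "'a fblfun" assume f: "f \<in> FBL"
  define g where "g = (\<lambda>xs. f xs - T (R f) xs)"
  have gF: "g \<in> FBL" unfolding g_def using f by (intro FBL_diff T_FBL R_FBL)
  have g0: "g ((xs o\<^sub>L Jb) o\<^sub>L Pb) = 0" for xs unfolding g_def by (simp add: T_def R_def)
  define gp where "gp = (\<lambda>xs. max (g xs) ((\<lambda>xs. 0) xs))"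
  define gm where "gm = (\<lambda>xs. max ((\<lambda>xs. -1 * g xs) xs) ((\<lambda>xs. 0) xs))"
  have gpF: "gp \<in> FBL" unfolding gp_def by (rule FBL_max[OF gF FBL_zero])
  have gmF: "gm \<in> FBL" unfolding gm_def by (rule FBL_max[OF FBL_scale[OF gF] FBL_zero])
  have "ch gp = 0" by (rule k[OF gpF]) (auto simp: gp_def T_def R_def g0)
  moreover have "ch gm = 0" by (rule k[OF gmF]) (auto simp: gm_def T_def R_def g0)
  moreover have "g = (\<lambda>xs. gp xs - gm xs)" unfolding gp_def gm_def by (auto simp: max_def)
  ultimately have "ch g = 0" using dual_diff[OF chi gpF gmF] by simp
  then show "ch f = ch (T (R f))" unfolding g_def using dual_diff[OF chi f T_FBL[OF R_FBL[OF f]]] by simp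
qed

lemma TR_zero_apply:
  assumes "T (R f) = (\<lambda>xs. 0)" shows "ch (T (R f)) = ch (\<lambda>xs. 0)"
  using assms by simp

end


context fbl_setting
begin

lemma S_add: "S (\<lambda>f. \<phi> f + \<psi> f) = (\<lambda>f. S \<phi> f + S \<psi> f)"
  by (auto simp: S_def fun_eq_iff)

lemma S_scale: "S (\<lambda>f. c * \<phi> f) = (\<lambda>f. c * S \<phi> f)"
  by (auto simp: S_def fun_eq_iff)

lemma S_apply: "f \<in> FBL \<Longrightarrow> S \<phi> f = \<phi> (R f)"
  by (simp add: S_def)

lemma dual_le_D: "dual_le a b \<Longrightarrow> f \<in> FBL \<Longrightarrow> (\<forall>xs. 0 \<le> f xs) \<Longrightarrow> a f \<le> b f"
  unfolding dual_le_def by blast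

lemma R_nonneg: "(\<forall>xs. 0 \<le> f xs) \<Longrightarrow> (\<forall>ys. 0 \<le> R f ys)"
  by (simp add: R_def)
lemma T_nonneg: "(\<forall>xs. 0 \<le> f xs) \<Longrightarrow> (\<forall>ys. 0 \<le> T f ys)"
  by (simp add: T_def)

lemma image_charact:
  assumes "ch \<in> FBL_dual" "\<forall>f\<in>FBL. ch f = ch (T (R f))"
  shows "ch \<in> S ` FBL_dual"
  using S_W[OF assms] W_dual[OF assms(1)] by (metis image_eqI)

lemma image_inv: "ch \<in> S ` X \<Longrightarrow> f \<in> FBL \<Longrightarrow> ch (T (R f)) = ch f"
  using S_inv by blast

lemma part2a:
  "(\<forall>\<phi>\<in>FBL_dual. S \<phi> \<in> FBL_dual) \<and>
   (\<forall>\<phi>\<in>FBL_dual. \<forall>\<psi>\<in>FBL_dual. S (\<lambda>f. \<phi> f + \<psi> f) = (\<lambda>f. S \<phi> f + S \<psi> f)) \<and>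
   (\<forall>c. \<forall>\<phi>\<in>FBL_dual. S (\<lambda>f. c * \<phi> f) = (\<lambda>f. c * S \<phi> f)) \<and>
   (\<forall>\<phi>\<in>FBL_dual. dual_norm (S \<phi>) = dual_norm \<phi>) \<and>
   (\<forall>\<phi>\<in>FBL_dual. \<forall>\<psi>\<in>FBL_dual. dual_le \<phi> \<psi> \<longleftrightarrow> dual_le (S \<phi>) (S \<psi>)) \<and>
   True"
proof (intro conjI ballI allI)
  show "\<And>\<phi>. \<phi> \<in> FBL_dual \<Longrightarrow> S \<phi> \<in> FBL_dual" by (rule S_dual)
  show "\<And>\<phi> \<psi>. S (\<lambda>f. \<phi> f + \<psi> f) = (\<lambda>f. S \<phi> f + S \<psi> f)" by (rule S_add)
  show "\<And>c \<phi>. S (\<lambda>f. c * \<phi> f) = (\<lambda>f. c * S \<phi> f)" by (rule S_scale)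
next
  fix \<phi> :: "'b fblfun \<Rightarrow> real"
  have "{\<bar>S \<phi> f\<bar> | f. f \<in> FBL \<and> fbl_norm f \<le> 1} = {\<bar>\<phi> g\<bar> | g. g \<in> FBL \<and> fbl_norm g \<le> 1}"
  proof safe
    fix f :: "'a fblfun" assume f: "f \<in> FBL" "fbl_norm f \<le> 1"
    have "fbl_norm (R f) \<le> 1" using R_norm[OF FBL_in_H0[OF f(1)]] f(2) by linarith
    then show "\<exists>g. \<bar>S \<phi> f\<bar> = \<bar>\<phi> g\<bar> \<and> g \<in> FBL \<and> fbl_norm g \<le> 1"
      using R_FBL[OF f(1)] f(1) by (intro exI[of _ "R f"]) (auto simp: S_apply)
  next
    fix g :: "'b fblfun" assume "g \<in> FBL" "fbl_norm g \<le> 1"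
    then show "\<exists>f. \<bar>\<phi> g\<bar> = \<bar>S \<phi> f\<bar> \<and> f \<in> FBL \<and> fbl_norm f \<le> 1"
      using T_FBL by (intro exI[of _ "T g"]) (auto simp: S_apply T_norm)
  qed
  then show "dual_norm (S \<phi>) = dual_norm \<phi>" unfolding dual_norm_def by simp
next
  fix \<phi> \<psi> :: "'b fblfun \<Rightarrow> real"
  show "dual_le \<phi> \<psi> = dual_le (S \<phi>) (S \<psi>)"
  proof
    assume a: "dual_le \<phi> \<psi>"
    show "dual_le (S \<phi>) (S \<psi>)" unfolding dual_le_def
      using dual_le_D[OF a R_FBL R_nonneg] by (simp add: S_apply)
  next
    assume a: "dual_le (S \<phi>) (S \<psi>)"
    show "dual_le \<phi> \<psi>" unfolding dual_le_def
    proof (intro ballI impI)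
      fix g :: "'b fblfun" assume g: "g \<in> FBL" "\<forall>xs. 0 \<le> g xs"
      have "S \<phi> (T g) \<le> S \<psi> (T g)" using dual_le_D[OF a T_FBL[OF g(1)] T_nonneg[OF g(2)]] .
      then show "\<phi> g \<le> \<psi> g" using T_FBL[OF g(1)] by (simp add: S_apply)
    qed
  qed
qed simp

lemma p2_ideal: "dual_ideal (S ` FBL_dual)"
proof -
  let ?B = "S ` FBL_dual"
  have Bsub: "?B \<subseteq> FBL_dual" using S_dual by blast
  show "dual_ideal ?B"
    unfolding dual_ideal_def
  proof (intro conjI ballI allI impI)
    show "?B \<subseteq> FBL_dual" by (rule Bsub)
    have "S (\<lambda>f. 0) \<in> ?B" using dual_zero by (rule imageI)
    then show "?B \<noteq> {}" by auto
  next
    fix a b assume "a \<in> ?B" "b \<in> ?B"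
    then obtain a0 b0 where "a0 \<in> FBL_dual" "b0 \<in> FBL_dual" "a = S a0" "b = S b0" by blast
    then have "(\<lambda>f. a f + b f) = S (\<lambda>f. a0 f + b0 f)" by (simp add: S_add)
    then show "(\<lambda>f. a f + b f) \<in> ?B" using dual_add_closed[OF \<open>a0 \<in> FBL_dual\<close> \<open>b0 \<in> FBL_dual\<close>] by (rule image_eqI)
  next
    fix c :: real and a assume "a \<in> ?B"
    then obtain a0 where "a0 \<in> FBL_dual" "a = S a0" by blast
    then have "(\<lambda>f. c * a f) = S (\<lambda>f. c * a0 f)" by (simp add: S_scale)
    then show "(\<lambda>f. c * a f) \<in> ?B" using dual_scale_closed[OF \<open>a0 \<in> FBL_dual\<close>] by (rule image_eqI)
  next
    fix \<psi> \<phi> m n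
    assume psi: "\<psi> \<in> ?B" and phi: "\<phi> \<in> FBL_dual"
      and mn: "dual_is_sup {\<psi>, \<lambda>f. - \<psi> f} m \<and> dual_is_sup {\<phi>, \<lambda>f. - \<phi> f} n \<and> dual_le n m"
    have m: "m \<in> FBL_dual" "dual_le \<psi> m" "dual_le (\<lambda>f. - \<psi> f) m"
      "\<And>u. u \<in> FBL_dual \<Longrightarrow> dual_le \<psi> u \<Longrightarrow> dual_le (\<lambda>f. - \<psi> f) u \<Longrightarrow> dual_le m u"
      using mn unfolding dual_is_sup_def by auto
    have n: "dual_le \<phi> n" "dual_le (\<lambda>f. - \<phi> f) n" "dual_le n m"
      using mn unfolding dual_is_sup_def by auto
    define m' where "m' = S (Wd m)"
    have m'd: "m' \<in> FBL_dual" unfolding m'_def by (intro S_dual W_dual m(1))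
    have m'a: "f \<in> FBL \<Longrightarrow> m' f = m (T (R f))" for f unfolding m'_def by (rule SW_apply)
    have "dual_le \<psi> m'" unfolding dual_le_def
    proof (intro ballI impI)
      fix f :: "'a fblfun" assume f: "f \<in> FBL" "\<forall>xs. 0 \<le> f xs"
      have "\<psi> (T (R f)) \<le> m (T (R f))"
        using dual_le_D[OF m(2) T_FBL[OF R_FBL[OF f(1)]]] f(2) TR_nonneg by blast
      then show "\<psi> f \<le> m' f" using image_inv[OF psi f(1)] m'a[OF f(1)] by simp
    qed
    moreover have "dual_le (\<lambda>f. - \<psi> f) m'" unfolding dual_le_def
    proof (intro ballI impI)
      fix f :: "'a fblfun" assume f: "f \<in> FBL" "\<forall>xs. 0 \<le> f xs"
      have "- \<psi> (T (R f)) \<le> m (T (R f))"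
        using dual_le_D[OF m(3) T_FBL[OF R_FBL[OF f(1)]]] f(2) TR_nonneg by blast
      then show "- \<psi> f \<le> m' f" using image_inv[OF psi f(1)] m'a[OF f(1)] by simp
    qed
    ultimately have mm': "dual_le m m'" using m(4)[OF m'd] by blast
    have "\<forall>f\<in>FBL. \<phi> f = \<phi> (T (R f))"
    proof (rule kernel[OF phi])
      fix f :: "'a fblfun" assume f: "f \<in> FBL" "\<forall>xs. 0 \<le> f xs" and z: "T (R f) = (\<lambda>xs. 0)"
      have "m f \<le> m' f" using dual_le_D[OF mm' f] .
      also have "\<dots> = 0" using m'a[OF f(1)] z dual_zero_fn[OF m(1)] by simp
      finally have "n f \<le> 0" using dual_le_D[OF n(3) f] by simp
      then show "\<phi> f = 0" using dual_le_D[OF n(1) f] dual_le_D[OF n(2) f] by simp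
    qed
    then show "\<phi> \<in> ?B" by (rule image_charact[OF phi])
  qed
qed

lemma p2_band: "dual_band (S ` FBL_dual)"
proof -
  let ?B = "S ` FBL_dual"
  have Bsub: "?B \<subseteq> FBL_dual" using S_dual by blast
  have ideal: "dual_ideal ?B" by (rule p2_ideal)
  show "dual_band ?B"
    unfolding dual_band_def
  proof (intro conjI allI impI)
    show "dual_ideal ?B" by (rule ideal)
    fix A s assume As: "A \<subseteq> ?B \<and> dual_is_sup A s"
    then have s: "s \<in> FBL_dual" "\<And>a. a \<in> A \<Longrightarrow> dual_le a s"
      "\<And>u. u \<in> FBL_dual \<Longrightarrow> (\<forall>a\<in>A. dual_le a u) \<Longrightarrow> dual_le s u"
      unfolding dual_is_sup_def by auto
    have AB: "A \<subseteq> ?B" using As by blast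
    define s' where "s' = S (Wd s)"
    have s'd: "s' \<in> FBL_dual" unfolding s'_def by (intro S_dual W_dual s(1))
    have s'a: "f \<in> FBL \<Longrightarrow> s' f = s (T (R f))" for f unfolding s'_def by (rule SW_apply)
    have "\<forall>a\<in>A. dual_le a s'"
    proof (intro ballI)
      fix a assume aA: "a \<in> A"
      show "dual_le a s'" unfolding dual_le_def
      proof (intro ballI impI)
        fix f :: "'a fblfun" assume f: "f \<in> FBL" "\<forall>xs. 0 \<le> f xs"
        have "a (T (R f)) \<le> s (T (R f))"
          using dual_le_D[OF s(2)[OF aA] T_FBL[OF R_FBL[OF f(1)]]] f(2) TR_nonneg by blast
        then show "a f \<le> s' f" using image_inv[of a FBL_dual f] aA AB f(1) s'a[OF f(1)] by auto
      qed
    qed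
    then have ss': "dual_le s s'" using s(3)[OF s'd] by blast
    have "\<forall>f\<in>FBL. s f = s (T (R f))"
    proof (rule kernel[OF s(1)])
      fix f :: "'a fblfun" assume f: "f \<in> FBL" "\<forall>xs. 0 \<le> f xs" and z: "T (R f) = (\<lambda>xs. 0)"
      have "s f \<le> s' f" using dual_le_D[OF ss' f] .
      also have "\<dots> = 0" using s'a[OF f(1)] z dual_zero_fn[OF s(1)] by simp
      finally have up: "s f \<le> 0" .
      have "0 \<le> s f"
      proof (cases "A = {}")
        case True
        have "dual_le s (\<lambda>f. 2 * s f)" using s(3)[OF dual_scale_closed[OF s(1)]] True by blast
        then show ?thesis using dual_le_D[OF _ f] by fastforce
      next
        case False
        then obtain a where aA: "a \<in> A" by blast
        then have ad: "a \<in> FBL_dual" using AB Bsub by blast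
        have "a f = a (T (R f))" using image_inv[of a FBL_dual f] aA AB f(1) by auto
        also have "\<dots> = 0" using z dual_zero_fn[OF ad] by simp
        finally show ?thesis using dual_le_D[OF s(2)[OF aA] f] by simp
      qed
      then show "s f = 0" using up by simp
    qed
    then show "s \<in> ?B" by (rule image_charact[OF s(1)])
  qed
qed

lemma tri_contra: "\<bar>a - b\<bar> < \<bar>b - c\<bar> / 2 \<Longrightarrow> \<bar>a - c\<bar> < \<bar>b - c\<bar> / 2 \<Longrightarrow> False" for a b c :: real
  by (auto simp: abs_if split: if_splits)

lemma p2_ws: "weak_star_closed (S ` FBL_dual)"
proof -
  let ?B = "S ` FBL_dual"
  have Bsub: "?B \<subseteq> FBL_dual" using S_dual by blast
  show "weak_star_closed ?B"
    unfolding weak_star_closed_def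
  proof (intro conjI ballI)
    show "?B \<subseteq> FBL_dual" by (rule Bsub)
    fix ch assume ch: "ch \<in> FBL_dual - ?B"
    then have "\<not> (\<forall>f\<in>FBL. ch f = ch (T (R f)))" using image_charact by blast
    then obtain f0 where f0: "f0 \<in> FBL" "ch f0 \<noteq> ch (T (R f0))" by blast
    define d where "d = \<bar>ch f0 - ch (T (R f0))\<bar>"
    have dpos: "d > 0" using f0 unfolding d_def by simp
    show "\<exists>fs \<epsilon>. finite fs \<and> fs \<subseteq> FBL \<and> \<epsilon> > 0 \<and>
        (\<forall>\<psi>\<in>FBL_dual. (\<forall>f\<in>fs. \<bar>\<psi> f - ch f\<bar> < \<epsilon>) \<longrightarrow> \<psi> \<notin> ?B)"
    proof (intro exI conjI ballI impI)
      show "finite {f0, T (R f0)}" by simp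
      show "{f0, T (R f0)} \<subseteq> FBL" using f0 T_FBL R_FBL by blast
      show "d / 2 > 0" using dpos by simp
      fix \<psi> assume "\<psi> \<in> FBL_dual" and cl: "\<forall>f\<in>{f0, T (R f0)}. \<bar>\<psi> f - ch f\<bar> < d / 2"
      show "\<psi> \<notin> ?B"
      proof
        assume "\<psi> \<in> ?B"
        then have "\<psi> (T (R f0)) = \<psi> f0" using image_inv f0(1) by blast
        moreover have "\<bar>\<psi> f0 - ch f0\<bar> < d / 2" "\<bar>\<psi> (T (R f0)) - ch (T (R f0))\<bar> < d / 2" using cl by auto
        ultimately show False unfolding d_def using tri_contra by metis
      qed
    qed
  qed
qed


lemma part2:
  "(\<forall>\<phi>\<in>FBL_dual. S \<phi> \<in> FBL_dual) \<and>
   (\<forall>\<phi>\<in>FBL_dual. \<forall>\<psi>\<in>FBL_dual. S (\<lambda>f. \<phi> f + \<psi> f) = (\<lambda>f. S \<phi> f + S \<psi> f)) \<and>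
   (\<forall>c. \<forall>\<phi>\<in>FBL_dual. S (\<lambda>f. c * \<phi> f) = (\<lambda>f. c * S \<phi> f)) \<and>
   (\<forall>\<phi>\<in>FBL_dual. dual_norm (S \<phi>) = dual_norm \<phi>) \<and>
   (\<forall>\<phi>\<in>FBL_dual. \<forall>\<psi>\<in>FBL_dual. dual_le \<phi> \<psi> \<longleftrightarrow> dual_le (S \<phi>) (S \<psi>)) \<and>
   dual_band (S ` FBL_dual) \<and> weak_star_closed (S ` FBL_dual)"
  using part2a p2_band p2_ws by (simp only: simp_thms)

end

theorem corollary2p7:
  fixes J :: "'b::banach \<Rightarrow> 'a::banach" and P :: "'a \<Rightarrow> 'b"
  assumes "linear J" and "\<And>y. norm (J y) = norm y"
    and "bounded_linear P" and "\<And>y. P (J y) = y" and "onorm P \<le> 1"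
  shows "(\<exists>T :: 'b fblfun \<Rightarrow> 'a fblfun.
            (\<forall>f\<in>FBL. T f \<in> FBL) \<and>
            (\<forall>f\<in>FBL. \<forall>g\<in>FBL. T (\<lambda>xs. f xs + g xs) = (\<lambda>xs. T f xs + T g xs)) \<and>
            (\<forall>c. \<forall>f\<in>FBL. T (\<lambda>xs. c * f xs) = (\<lambda>xs. c * T f xs)) \<and>
            (\<forall>f\<in>FBL. fbl_norm (T f) = fbl_norm f) \<and>
            (\<forall>f\<in>FBL. \<forall>g\<in>FBL. (\<forall>xs. f xs \<le> g xs) \<longleftrightarrow> (\<forall>xs. T f xs \<le> T g xs)) \<and>
            closed_sublattice_of FBL (T ` FBL))
       \<and> (\<exists>S :: ('b fblfun \<Rightarrow> real) \<Rightarrow> ('a fblfun \<Rightarrow> real).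
            (\<forall>\<phi>\<in>FBL_dual. S \<phi> \<in> FBL_dual) \<and>
            (\<forall>\<phi>\<in>FBL_dual. \<forall>\<psi>\<in>FBL_dual. S (\<lambda>f. \<phi> f + \<psi> f) = (\<lambda>f. S \<phi> f + S \<psi> f)) \<and>
            (\<forall>c. \<forall>\<phi>\<in>FBL_dual. S (\<lambda>f. c * \<phi> f) = (\<lambda>f. c * S \<phi> f)) \<and>
            (\<forall>\<phi>\<in>FBL_dual. dual_norm (S \<phi>) = dual_norm \<phi>) \<and>
            (\<forall>\<phi>\<in>FBL_dual. \<forall>\<psi>\<in>FBL_dual. dual_le \<phi> \<psi> \<longleftrightarrow> dual_le (S \<phi>) (S \<psi>)) \<and>
            dual_band (S ` FBL_dual) \<and> weak_star_closed (S ` FBL_dual))"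
proof -
  interpret fbl_setting J P by (rule fbl_setting.intro[OF assms])
  show ?thesis
    apply (rule conjI)
     apply (rule exI, rule part1)
    apply (rule exI, rule part2)
    done
qed

end
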